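(* Let $(L,\wedge,\vee,0,1)$ be a bounded lattice and for $x,y\in L$ set $x\boxplus y:=\{z\in L\mid x\vee y=x\vee z=z\vee y\}$. Then $(L,\boxplus,0)$ is a commutative, total and reproductive mosaic, in which the inverse of each $x\in L$ is $x$ itself. Moreover, $1$ is the unique element $u\in L$ such that for all $x\in L$: $u\in x\boxplus x$ implies $x=u$.
   Context: A multioperation on a set $A$ is a function $\boxplus:A\times A\to\wp(A)$; for $x\in A$ and $Y\subseteq A$, $x\boxplus Y:=\bigcup_{y\in Y}x\boxplus y$. It is total if $x\boxplus y\ne\emptyset$ for all $x,y$; commutative if $x\boxplus y=y\boxplus x$; reproductive if $x\boxplus A=A$ for all $x\in A$. A neutral element $e$ satisfies $e\boxplus x=x\boxplus e=\{x\}$ for all $x$. For an endofunction $\rho$, $\rho$-reversibility means: $z\in x\boxplus y$ implies $x\in z\boxplus\rho(y)$ and $y\in\rho(x)\boxplus z$. A mosaic $(A,\boxplus,e)$ is a set with a multioperation with neutral element $e$ that is $\rho$-reversible for some endofunction $\rho$. An inverse of $x$ is an element $y$ with $e\in(x\boxplus y)\cap(y\boxplus x)$. *)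

theory Defs
  imports Main
begin

text \<open>Multioperations on the whole type (carrier = UNIV).\<close>

definition mo_total :: "('a \<Rightarrow> 'a \<Rightarrow> 'a set) \<Rightarrow> bool" where
  "mo_total op \<longleftrightarrow> (\<forall>x y. op x y \<noteq> {})"

definition mo_commutative :: "('a \<Rightarrow> 'a \<Rightarrow> 'a set) \<Rightarrow> bool" where
  "mo_commutative op \<longleftrightarrow> (\<forall>x y. op x y = op y x)"

definition mo_reproductive :: "('a \<Rightarrow> 'a \<Rightarrow> 'a set) \<Rightarrow> bool" where
  "mo_reproductive op \<longleftrightarrow> (\<forall>x. (\<Union>y\<in>UNIV. op x y) = UNIV)"

definition neutral :: "('a \<Rightarrow> 'a \<Rightarrow> 'a set) \<Rightarrow> 'a \<Rightarrow> bool" where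
  "neutral op e \<longleftrightarrow> (\<forall>x. op e x = {x} \<and> op x e = {x})"

definition rho_reversible :: "('a \<Rightarrow> 'a \<Rightarrow> 'a set) \<Rightarrow> ('a \<Rightarrow> 'a) \<Rightarrow> bool" where
  "rho_reversible op \<rho> \<longleftrightarrow>
     (\<forall>x y z. z \<in> op x y \<longrightarrow> x \<in> op z (\<rho> y) \<and> y \<in> op (\<rho> x) z)"

definition mosaic :: "('a \<Rightarrow> 'a \<Rightarrow> 'a set) \<Rightarrow> 'a \<Rightarrow> bool" where
  "mosaic op e \<longleftrightarrow> neutral op e \<and> (\<exists>\<rho>. rho_reversible op \<rho>)"

definition is_inverse :: "('a \<Rightarrow> 'a \<Rightarrow> 'a set) \<Rightarrow> 'a \<Rightarrow> 'a \<Rightarrow> 'a \<Rightarrow> bool" where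
  "is_inverse op e x y \<longleftrightarrow> e \<in> op x y \<inter> op y x"

definition lat_plus :: "'a::bounded_lattice \<Rightarrow> 'a \<Rightarrow> 'a set" where
  "lat_plus x y = {z. sup x y = sup x z \<and> sup x z = sup z y}"

end

theory Submission
  imports Defs
begin

lemma lp: "z \<in> lat_plus x y \<longleftrightarrow> sup x z = sup x y \<and> sup z y = sup x y"
  unfolding lat_plus_def by auto

theorem mainTheorem4:
  shows "mosaic (lat_plus :: 'a::bounded_lattice \<Rightarrow> 'a \<Rightarrow> 'a set) bot
    \<and> mo_commutative (lat_plus :: 'a \<Rightarrow> 'a \<Rightarrow> 'a set)
    \<and> mo_total (lat_plus :: 'a \<Rightarrow> 'a \<Rightarrow> 'a set)
    \<and> mo_reproductive (lat_plus :: 'a \<Rightarrow> 'a \<Rightarrow> 'a set)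
    \<and> (\<forall>x::'a. \<forall>y. is_inverse lat_plus bot x y \<longleftrightarrow> y = x)
    \<and> (\<forall>u::'a. (\<forall>x. u \<in> lat_plus x x \<longrightarrow> x = u) \<longleftrightarrow> u = top)"
proof (intro conjI)
  have n: "neutral (lat_plus :: 'a \<Rightarrow> 'a \<Rightarrow> 'a set) bot"
    unfolding neutral_def set_eq_iff lp by auto
  have r: "rho_reversible (lat_plus :: 'a \<Rightarrow> 'a \<Rightarrow> 'a set) id"
    unfolding rho_reversible_def lp by (auto simp: sup_commute)
  show "mosaic (lat_plus :: 'a::bounded_lattice \<Rightarrow> 'a \<Rightarrow> 'a set) bot"
    unfolding mosaic_def using n r by blast
  show "mo_commutative (lat_plus :: 'a \<Rightarrow> 'a \<Rightarrow> 'a set)"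
    unfolding mo_commutative_def lp set_eq_iff by (auto simp: sup_commute)
  show "mo_total (lat_plus :: 'a \<Rightarrow> 'a \<Rightarrow> 'a set)"
    unfolding mo_total_def
  proof (intro allI)
    fix x y :: 'a
    have "sup x y \<in> lat_plus x y" unfolding lp
      by (metis sup.assoc sup.idem sup_commute sup_left_commute)
    then show "lat_plus x y \<noteq> {}" by blast
  qed
  show "mo_reproductive (lat_plus :: 'a \<Rightarrow> 'a \<Rightarrow> 'a set)"
    unfolding mo_reproductive_def
  proof (intro allI equalityI subsetI)
    fix x z :: 'a
    have "z \<in> lat_plus x (sup x z)" unfolding lp
      by (metis sup.assoc sup.idem sup_commute sup_left_commute)
    then show "z \<in> (\<Union>y\<in>UNIV. lat_plus x y)" by blast
  qed simp
  show "\<forall>x::'a. \<forall>y. is_inverse lat_plus bot x y \<longleftrightarrow> y = x"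
    unfolding is_inverse_def Int_iff lp by (auto simp: sup_commute)
  show "\<forall>u::'a. (\<forall>x. u \<in> lat_plus x x \<longrightarrow> x = u) \<longleftrightarrow> u = top"
    unfolding lp by (metis sup_top_left sup_top_right sup.idem sup_absorb1 sup_absorb2 top_greatest sup_commute)
qed

end
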